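(* Let $k\ge1$ and let $H$ be a $k$-local operator on $N$ qubits (not necessarily Hermitian). If $H|W^q\rangle=0$ for all $q\in\{0,1,\dots,\min(2k,N)\}$, then $H|W^p\rangle=0$ for all $p\in\{0,1,\dots,N\}$.
   Context: System of $N$ qubits with local basis $|0\rangle,|1\rangle$; $s_i^\dagger$ acts on site $i$ as $s^\dagger|0\rangle=|1\rangle$, $s^\dagger|1\rangle=0$, $s_i=(s_i^\dagger)^\dagger$; $|\overline 0\rangle=|0\rangle^{\otimes N}$. Every operator has a unique expansion in normal-ordered strings $s^\dagger_{j_1}\cdots s^\dagger_{j_n}s_{k_1}\cdots s_{k_m}$ (the $j$'s pairwise distinct, the $k$'s pairwise distinct); an operator is $k$-local if every string with nonzero coefficient involves at most $k$ distinct sites. $S^\dagger=\sum_i s_i^\dagger$ and $|W^p\rangle$ is the normalization of $(S^\dagger)^p|\overline 0\rangle$ for $p=0,\dots,N$. *)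

theory Defs
  imports Complex_Main
begin

text \<open>N qubits, sites 0..N-1. A computational basis state is identified with the set
  of sites in state 1 (a subset of {..<N}). A state vector is a function from such
  sets to complex amplitudes; an operator is its matrix, indexed by pairs of
  basis sets (only entries with both indices in Pow {..<N} are meaningful).\<close>

type_synonym qstate = "nat set \<Rightarrow> complex"
type_synonym qop = "nat set \<Rightarrow> nat set \<Rightarrow> complex"

definition apply_op :: "nat \<Rightarrow> qop \<Rightarrow> qstate \<Rightarrow> qstate" where
  "apply_op N H v = (\<lambda>S. \<Sum>T\<in>Pow {..<N}. H S T * v T)"

text \<open>Matrix of the normal-ordered string  s^dag_J s_K  (product of s^dag_j, j in J,
  after the product of s_k, k in K): s_K sends |T> to |T-K> if K is a subset of T
  (else 0), then s^dag_J sends |U> to |U \<union> J> if J and U are disjoint (else 0).\<close>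
definition nstring :: "nat set \<Rightarrow> nat set \<Rightarrow> qop" where
  "nstring J K = (\<lambda>S T. if K \<subseteq> T \<and> J \<inter> (T - K) = {} \<and> S = (T - K) \<union> J then 1 else 0)"

definition k_local :: "nat \<Rightarrow> nat \<Rightarrow> qop \<Rightarrow> bool" where
  "k_local N k H \<longleftrightarrow> (\<exists>c :: nat set \<Rightarrow> nat set \<Rightarrow> complex.
     (\<forall>J K. c J K \<noteq> 0 \<longrightarrow> J \<subseteq> {..<N} \<and> K \<subseteq> {..<N} \<and> card (J \<union> K) \<le> k) \<and>
     (\<forall>S T. S \<subseteq> {..<N} \<longrightarrow> T \<subseteq> {..<N} \<longrightarrow>
        H S T = (\<Sum>J\<in>Pow {..<N}. \<Sum>K\<in>Pow {..<N}. c J K * nstring J K S T)))"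

definition vac :: qstate where
  "vac = (\<lambda>S. if S = {} then 1 else 0)"

definition Sdag :: "nat \<Rightarrow> qop" where
  "Sdag N = (\<lambda>S T. \<Sum>i<N. nstring {i} {} S T)"

definition vnorm :: "nat \<Rightarrow> qstate \<Rightarrow> real" where
  "vnorm N v = sqrt (\<Sum>S\<in>Pow {..<N}. (cmod (v S))\<^sup>2)"

definition Wstate :: "nat \<Rightarrow> nat \<Rightarrow> qstate" where
  "Wstate N p = (let v = (apply_op N (Sdag N) ^^ p) vac
                 in (\<lambda>S. v S / complex_of_real (vnorm N v)))"

definition is_zero :: "nat \<Rightarrow> qstate \<Rightarrow> bool" where
  "is_zero N v \<longleftrightarrow> (\<forall>S. S \<subseteq> {..<N} \<longrightarrow> v S = 0)"

end

theory Submission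
  imports Defs
begin

definition Dk :: "nat \<Rightarrow> nat \<Rightarrow> qstate" where
  "Dk N p = (\<lambda>S. if S \<subseteq> {..<N} \<and> card S = p then 1 else 0)"

lemma nstring1: "nstring {i} {} S T = (if T = S - {i} \<and> i \<in> S then 1 else 0)"
  unfolding nstring_def by auto

lemma sdag_step:
  "apply_op N (Sdag N) f S = (\<Sum>i<N. if i \<in> S \<and> S - {i} \<subseteq> {..<N} then f (S - {i}) else 0)"
proof -
  have "apply_op N (Sdag N) f S = (\<Sum>T\<in>Pow {..<N}. \<Sum>i<N. nstring {i} {} S T * f T)"
    unfolding apply_op_def Sdag_def by (simp add: sum_distrib_right)
  also have "\<dots> = (\<Sum>i<N. \<Sum>T\<in>Pow {..<N}. nstring {i} {} S T * f T)"
    by (rule sum.swap)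
  also have "\<dots> = (\<Sum>i<N. if i \<in> S \<and> S - {i} \<subseteq> {..<N} then f (S - {i}) else 0)"
  proof (rule sum.cong[OF refl])
    fix i assume "i \<in> {..<N}"
    have "(\<Sum>T\<in>Pow {..<N}. nstring {i} {} S T * f T)
        = (\<Sum>T\<in>Pow {..<N}. if T = S - {i} then (if i \<in> S then f T else 0) else 0)"
      by (rule sum.cong[OF refl]) (auto simp: nstring1)
    also have "\<dots> = (if i \<in> S \<and> S - {i} \<subseteq> {..<N} then f (S - {i}) else 0)"
      by (simp add: sum.delta)
    finally show "(\<Sum>T\<in>Pow {..<N}. nstring {i} {} S T * f T)
        = (if i \<in> S \<and> S - {i} \<subseteq> {..<N} then f (S - {i}) else 0)" .
  qed
  finally show ?thesis .
qed

lemma sdag_pow: "(apply_op N (Sdag N) ^^ p) vac = (\<lambda>S. (fact p :: complex) * Dk N p S)"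
proof (induction p)
  case 0
  show ?case
  proof
    fix S :: "nat set"
    show "(apply_op N (Sdag N) ^^ 0) vac S = fact 0 * Dk N 0 S"
      using finite_subset[of S "{..<N}"] by (auto simp: vac_def Dk_def)
  qed
next
  case (Suc p)
  show ?case
  proof
    fix S :: "nat set"
    have "(apply_op N (Sdag N) ^^ Suc p) vac S
       = (\<Sum>i<N. if i \<in> S \<and> S - {i} \<subseteq> {..<N} then (fact p :: complex) * Dk N p (S - {i}) else 0)"
      by (simp only: funpow.simps comp_def Suc.IH sdag_step)
    also have "\<dots> = fact (Suc p) * Dk N (Suc p) S"
    proof (cases "S \<subseteq> {..<N}")
      case True
      then have fin: "finite S" using finite_subset by blast
      have "(\<Sum>i<N. if i \<in> S \<and> S - {i} \<subseteq> {..<N} then (fact p :: complex) * Dk N p (S - {i}) else 0)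
          = (\<Sum>i<N. if i \<in> S then (if card S = Suc p then fact p else 0) else 0)"
      proof (rule sum.cong[OF refl])
        fix i assume "i \<in> {..<N}"
        show "(if i \<in> S \<and> S - {i} \<subseteq> {..<N} then (fact p :: complex) * Dk N p (S - {i}) else 0)
          = (if i \<in> S then (if card S = Suc p then fact p else 0) else 0)"
        proof (cases "i \<in> S")
          case True
          have c: "card (S - {i}) = card S - 1" using True fin by (simp add: card_Diff_singleton)
          have "card S \<noteq> 0" using fin True by auto
          then have e: "(card (S - {i}) = p) = (card S = Suc p)" unfolding c by linarith
          have "S - {i} \<subseteq> {..<N}" using \<open>S \<subseteq> {..<N}\<close> by blast
          then show ?thesis using True unfolding Dk_def e by simp
        qed simp
      qed
      also have "\<dots> = (\<Sum>i\<in>{..<N} \<inter> S. (if card S = Suc p then fact p else 0))"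
        by (rule sum.inter_restrict[symmetric]) simp
      also have "{..<N} \<inter> S = S" using True by blast
      also have "(\<Sum>i\<in>S. (if card S = Suc p then (fact p :: complex) else 0)) = fact (Suc p) * Dk N (Suc p) S"
        using True by (simp add: Dk_def fact_Suc algebra_simps)
      finally show ?thesis .
    next
      case False
      have "\<And>i. i < N \<Longrightarrow> \<not> (i \<in> S \<and> S - {i} \<subseteq> {..<N})" using False by auto
      then have "\<And>i. i \<in> {..<N} \<Longrightarrow> (if i \<in> S \<and> S - {i} \<subseteq> {..<N} then (fact p :: complex) * Dk N p (S - {i}) else 0) = 0" by auto
      then show ?thesis using False by (simp add: Dk_def)
    qed
    finally show "(apply_op N (Sdag N) ^^ Suc p) vac S = fact (Suc p) * Dk N (Suc p) S" .
  qed
qed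


lemma alt_sum_zero:
  assumes "finite S" "i \<in> S" "i \<notin> A"
  shows "(\<Sum>U\<in>Pow S. (-1::complex)^card (S - U) * (if U \<inter> A = J then 1 else 0)) = 0"
proof -
  define S0 where "S0 = S - {i}"
  have S: "S = insert i S0" and i0: "i \<notin> S0" and fin0: "finite S0"
    using assms by (auto simp: S0_def)
  define f where "f U = (-1::complex)^card (S - U) * (if U \<inter> A = J then 1 else 0)" for U
  have "(\<Sum>U\<in>Pow S. f U) = (\<Sum>U\<in>Pow S0. f U) + (\<Sum>U\<in>insert i ` Pow S0. f U)"
    unfolding S Pow_insert
  proof (rule sum.union_disjoint)
    show "finite (Pow S0)" using fin0 by simp
    show "finite (insert i ` Pow S0)" using fin0 by simp
    show "Pow S0 \<inter> insert i ` Pow S0 = {}" using i0 by blast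
  qed
  also have "(\<Sum>U\<in>insert i ` Pow S0. f U) = (\<Sum>U\<in>Pow S0. f (insert i U))"
  proof (rule sum.reindex_cong[where l="insert i"])
    show "inj_on (insert i) (Pow S0)"
    proof (rule inj_onI)
      fix U V assume "U \<in> Pow S0" "V \<in> Pow S0" "insert i U = insert i V"
      then have "i \<notin> U" "i \<notin> V" and e: "insert i U = insert i V" using i0 by auto
      then show "U = V" by (metis Diff_insert_absorb)
    qed
  qed simp_all
  also have "(\<Sum>U\<in>Pow S0. f (insert i U)) = (\<Sum>U\<in>Pow S0. - f U)"
  proof (rule sum.cong[OF refl])
    fix U assume U: "U \<in> Pow S0"
    have e1: "S - insert i U = S0 - U" using S i0 U by blast
    have e2: "S - U = insert i (S0 - U)" using S i0 U by blast
    have c2: "card (S - U) = Suc (card (S0 - U))" unfolding e2 using fin0 i0 by simp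
    have e3: "insert i U \<inter> A = U \<inter> A" using assms(3) by blast
    show "f (insert i U) = - f U" unfolding f_def e1 e3 c2 by simp
  qed
  also have "(\<Sum>U\<in>Pow S0. - f U) = - (\<Sum>U\<in>Pow S0. f U)" by (rule sum_negf)
  finally show ?thesis unfolding f_def by simp
qed

definition Gf :: "nat \<Rightarrow> (nat set \<Rightarrow> nat set \<Rightarrow> complex) \<Rightarrow> nat set \<Rightarrow> complex" where
  "Gf N a S = (\<Sum>J\<in>Pow {..<N}. \<Sum>K\<in>Pow {..<N}. a J K * (if S \<inter> (J \<union> K) = J then 1 else 0))"

lemma Gf_alt:
  assumes loc: "\<And>J K. a J K \<noteq> 0 \<Longrightarrow> card (J \<union> K) \<le> k \<and> finite (J \<union> K)"
    and finS: "finite S" and big: "card S > k"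
  shows "(\<Sum>U\<in>Pow S. (-1::complex)^card (S - U) * Gf N a U) = 0"
proof -
  have "(\<Sum>U\<in>Pow S. (-1::complex)^card (S - U) * Gf N a U)
     = (\<Sum>U\<in>Pow S. \<Sum>J\<in>Pow {..<N}. \<Sum>K\<in>Pow {..<N}. a J K * ((-1::complex)^card (S - U) * (if U \<inter> (J \<union> K) = J then 1 else 0)))"
    unfolding Gf_def sum_distrib_left
    apply (rule sum.cong[OF refl])+
    by (rule mult.left_commute)
  also have "\<dots> = (\<Sum>J\<in>Pow {..<N}. \<Sum>U\<in>Pow S. \<Sum>K\<in>Pow {..<N}. a J K * ((-1::complex)^card (S - U) * (if U \<inter> (J \<union> K) = J then 1 else 0)))"
    by (rule sum.swap)
  also have "\<dots> = (\<Sum>J\<in>Pow {..<N}. \<Sum>K\<in>Pow {..<N}. \<Sum>U\<in>Pow S. a J K * ((-1::complex)^card (S - U) * (if U \<inter> (J \<union> K) = J then 1 else 0)))"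
    by (rule sum.cong[OF refl], rule sum.swap)
  also have "\<dots> = 0"
  proof (rule sum.neutral, rule ballI, rule sum.neutral, rule ballI)
    fix J K
    show "(\<Sum>U\<in>Pow S. a J K * ((-1::complex)^card (S - U) * (if U \<inter> (J \<union> K) = J then 1 else 0))) = 0"
    proof (cases "a J K = 0")
      case False
      then have cf: "card (J \<union> K) \<le> k \<and> finite (J \<union> K)" by (rule loc)
      have "\<not> S \<subseteq> J \<union> K"
      proof
        assume "S \<subseteq> J \<union> K"
        then have "card S \<le> card (J \<union> K)" by (rule card_mono[OF conjunct2[OF cf]])
        then show False using cf big by linarith
      qed
      then obtain i where i1: "i \<in> S" and i2: "i \<notin> J \<union> K" by blast
      have z: "(\<Sum>U\<in>Pow S. (-1::complex)^card (S - U) * (if U \<inter> (J \<union> K) = J then 1 else 0)) = 0"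
        by (rule alt_sum_zero[OF finS i1 i2])
      have "(\<Sum>U\<in>Pow S. a J K * ((-1::complex)^card (S - U) * (if U \<inter> (J \<union> K) = J then 1 else 0)))
          = a J K * (\<Sum>U\<in>Pow S. (-1::complex)^card (S - U) * (if U \<inter> (J \<union> K) = J then 1 else 0))"
        by (rule sum_distrib_left[symmetric])
      then show ?thesis unfolding z by simp
    qed simp
  qed
  finally show ?thesis .
qed

lemma junta_zero:
  assumes loc: "\<And>J K. a J K \<noteq> 0 \<Longrightarrow> card (J \<union> K) \<le> k \<and> finite (J \<union> K)"
    and small: "\<And>S. S \<subseteq> {..<N} \<Longrightarrow> card S \<le> k \<Longrightarrow> Gf N a S = 0"
  shows "S \<subseteq> {..<N} \<Longrightarrow> Gf N a S = 0"
proof (induction "card S" arbitrary: S rule: less_induct)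
  case less
  show ?case
  proof (cases "card S \<le> k")
    case True
    then show ?thesis using small less.prems by blast
  next
    case False
    have finS: "finite S" using less.prems finite_subset by blast
    have alt: "(\<Sum>U\<in>Pow S. (-1::complex)^card (S - U) * Gf N a U) = 0"
      using Gf_alt[OF loc finS] False by simp
    have "(\<Sum>U\<in>Pow S. (-1::complex)^card (S - U) * Gf N a U)
        = (-1::complex)^card (S - S) * Gf N a S + (\<Sum>U\<in>Pow S - {S}. (-1::complex)^card (S - U) * Gf N a U)"
      by (rule sum.remove) (use finS in auto)
    also have "(\<Sum>U\<in>Pow S - {S}. (-1::complex)^card (S - U) * Gf N a U) = 0"
    proof (rule sum.neutral, rule ballI)
      fix U assume U: "U \<in> Pow S - {S}"
      then have "U \<subset> S" by blast
      then have "card U < card S" using finS psubset_card_mono by blast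
      moreover have "U \<subseteq> {..<N}" using U less.prems by blast
      ultimately have "Gf N a U = 0" using less.hyps by blast
      then show "(-1::complex)^card (S - U) * Gf N a U = 0" by simp
    qed
    finally show ?thesis using alt by simp
  qed
qed


definition ind :: "nat set \<Rightarrow> nat set \<Rightarrow> nat set \<Rightarrow> nat \<Rightarrow> bool" where
  "ind J K S p \<longleftrightarrow> J \<subseteq> S \<and> (S - J) \<inter> K = {} \<and> card (S - J) + card K = p"

lemma nsum_term:
  assumes "J \<subseteq> {..<N}" "K \<subseteq> {..<N}" "S \<subseteq> {..<N}" "T \<subseteq> {..<N}"
  shows "nstring J K S T * Dk N p T = (if T = (S - J) \<union> K then (if ind J K S p then 1 else 0) else 0)"
proof (cases "T = (S - J) \<union> K")
  case True
  have e: "(K \<subseteq> T \<and> J \<inter> (T - K) = {} \<and> S = (T - K) \<union> J) \<longleftrightarrow> (J \<subseteq> S \<and> (S - J) \<inter> K = {})"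
    using True by blast
  have f1: "finite (S - J)" using assms(3) finite_subset by blast
  have f2: "finite K" using assms(2) finite_subset by blast
  show ?thesis
  proof (cases "J \<subseteq> S \<and> (S - J) \<inter> K = {}")
    case c: True
    have "card T = card (S - J) + card K" unfolding True
      by (rule card_Un_disjoint[OF f1 f2]) (use c in blast)
    then show ?thesis using c e assms(4) \<open>T = (S - J) \<union> K\<close>
      unfolding nstring_def Dk_def ind_def by simp
  next
    case c: False
    have n1: "\<not> (K \<subseteq> T \<and> J \<inter> (T - K) = {} \<and> S = (T - K) \<union> J)" using e c by blast
    have n2: "\<not> ind J K S p" using c unfolding ind_def by blast
    have "nstring J K S T = 0" using n1 unfolding nstring_def by (rule if_not_P)
    then show ?thesis using n2 by simp
  qed
next
  case False
  have "\<not> (K \<subseteq> T \<and> J \<inter> (T - K) = {} \<and> S = (T - K) \<union> J)"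
  proof
    assume h: "K \<subseteq> T \<and> J \<inter> (T - K) = {} \<and> S = (T - K) \<union> J"
    then have "S - J = T - K" by blast
    then have "T = (S - J) \<union> K" using h by blast
    then show False using False by simp
  qed
  then have "nstring J K S T = 0" unfolding nstring_def by (rule if_not_P)
  then show ?thesis using False by simp
qed

lemma nsum:
  assumes "J \<subseteq> {..<N}" "K \<subseteq> {..<N}" "S \<subseteq> {..<N}"
  shows "(\<Sum>T\<in>Pow {..<N}. nstring J K S T * Dk N p T) = (if ind J K S p then 1 else 0)"
proof -
  have "(\<Sum>T\<in>Pow {..<N}. nstring J K S T * Dk N p T)
      = (\<Sum>T\<in>Pow {..<N}. if T = (S - J) \<union> K then (if ind J K S p then 1 else 0) else 0)"
  proof (rule sum.cong[OF refl])
    fix T assume "T \<in> Pow {..<N}"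
    then show "nstring J K S T * Dk N p T = (if T = (S - J) \<union> K then (if ind J K S p then 1 else 0) else 0)"
      using nsum_term[OF assms] by blast
  qed
  also have "\<dots> = (if ind J K S p then 1 else 0)"
  proof -
    have "(S - J) \<union> K \<in> Pow {..<N}" using assms by blast
    then show ?thesis by (simp add: sum.delta)
  qed
  finally show ?thesis .
qed

lemma HD:
  assumes exp: "\<forall>S T. S \<subseteq> {..<N} \<longrightarrow> T \<subseteq> {..<N} \<longrightarrow>
        H S T = (\<Sum>J\<in>Pow {..<N}. \<Sum>K\<in>Pow {..<N}. c J K * nstring J K S T)"
    and S: "S \<subseteq> {..<N}"
  shows "apply_op N H (Dk N p) S = (\<Sum>J\<in>Pow {..<N}. \<Sum>K\<in>Pow {..<N}. c J K * (if ind J K S p then 1 else 0))"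
proof -
  have "apply_op N H (Dk N p) S = (\<Sum>T\<in>Pow {..<N}. (\<Sum>J\<in>Pow {..<N}. \<Sum>K\<in>Pow {..<N}. c J K * nstring J K S T) * Dk N p T)"
    unfolding apply_op_def
  proof (rule sum.cong[OF refl])
    fix T assume "T \<in> Pow {..<N}"
    then have "H S T = (\<Sum>J\<in>Pow {..<N}. \<Sum>K\<in>Pow {..<N}. c J K * nstring J K S T)" using exp S by blast
    then show "H S T * Dk N p T = (\<Sum>J\<in>Pow {..<N}. \<Sum>K\<in>Pow {..<N}. c J K * nstring J K S T) * Dk N p T"
      by simp
  qed
  also have "\<dots> = (\<Sum>T\<in>Pow {..<N}. \<Sum>J\<in>Pow {..<N}. \<Sum>K\<in>Pow {..<N}. c J K * (nstring J K S T * Dk N p T))"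
    unfolding sum_distrib_right
    apply (rule sum.cong[OF refl])+
    by (rule mult.assoc)
  also have "\<dots> = (\<Sum>J\<in>Pow {..<N}. \<Sum>T\<in>Pow {..<N}. \<Sum>K\<in>Pow {..<N}. c J K * (nstring J K S T * Dk N p T))"
    by (rule sum.swap)
  also have "\<dots> = (\<Sum>J\<in>Pow {..<N}. \<Sum>K\<in>Pow {..<N}. \<Sum>T\<in>Pow {..<N}. c J K * (nstring J K S T * Dk N p T))"
    by (rule sum.cong[OF refl], rule sum.swap)
  also have "\<dots> = (\<Sum>J\<in>Pow {..<N}. \<Sum>K\<in>Pow {..<N}. c J K * (\<Sum>T\<in>Pow {..<N}. nstring J K S T * Dk N p T))"
    unfolding sum_distrib_left ..
  also have "\<dots> = (\<Sum>J\<in>Pow {..<N}. \<Sum>K\<in>Pow {..<N}. c J K * (if ind J K S p then 1 else 0))"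
  proof (rule sum.cong[OF refl], rule sum.cong[OF refl])
    fix J K assume "J \<in> Pow {..<N}" "K \<in> Pow {..<N}"
    then show "c J K * (\<Sum>T\<in>Pow {..<N}. nstring J K S T * Dk N p T) = c J K * (if ind J K S p then 1 else 0)"
      using nsum[of J N K S p] S by simp
  qed
  finally show ?thesis .
qed

lemma Wred:
  assumes "p \<le> N"
  shows "is_zero N (apply_op N H (Wstate N p)) \<longleftrightarrow> (\<forall>S. S \<subseteq> {..<N} \<longrightarrow> apply_op N H (Dk N p) S = 0)"
proof -
  define v where "v = (\<lambda>S. (fact p :: complex) * Dk N p S)"
  define r where "r = complex_of_real (vnorm N v)"
  have W: "Wstate N p = (\<lambda>S. v S / r)"
    unfolding Wstate_def sdag_pow v_def r_def Let_def ..
  have pos: "0 < (\<Sum>S\<in>Pow {..<N}. (cmod (v S))\<^sup>2)"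
  proof (rule sum_pos2)
    show "finite (Pow {..<N})" by simp
    show "{..<p} \<in> Pow {..<N}" using assms by auto
    show "0 < (cmod (v {..<p}))\<^sup>2" using assms unfolding v_def Dk_def by simp
    show "\<And>i. i \<in> Pow {..<N} \<Longrightarrow> 0 \<le> (cmod (v i))\<^sup>2" by simp
  qed
  have r0: "r \<noteq> 0" unfolding r_def vnorm_def using pos by simp
  have f0: "(fact p :: complex) \<noteq> 0" by simp
  have eq: "apply_op N H (Wstate N p) S = (fact p / r) * apply_op N H (Dk N p) S" for S
    unfolding W apply_op_def v_def sum_distrib_left
    by (rule sum.cong[OF refl]) (simp add: divide_inverse mult_ac)
  show ?thesis unfolding is_zero_def eq using r0 f0 by simp
qed


lemma rel:
  assumes fS: "finite S" and fJ: "finite J"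
  shows "(if ind J K S p then (1::complex) else 0)
       = (if int (card J) - int (card K) = int (card S) - int p then 1 else 0) * (if S \<inter> (J \<union> K) = J then 1 else 0)"
proof (cases "S \<inter> (J \<union> K) = J")
  case True
  then have JS: "J \<subseteq> S" and d: "(S - J) \<inter> K = {}" by blast+
  have c1: "card (S - J) = card S - card J" by (rule card_Diff_subset[OF fJ JS])
  have c2: "card J \<le> card S" by (rule card_mono[OF fS JS])
  have "(card (S - J) + card K = p) \<longleftrightarrow> (int (card J) - int (card K) = int (card S) - int p)"
    unfolding c1 using c2 by linarith
  then show ?thesis using True JS d unfolding ind_def by simp
next
  case False
  then have "\<not> ind J K S p" unfolding ind_def by blast
  then show ?thesis using False by simp
qed

theorem proposition3:
  fixes N k :: nat and H :: qop
  assumes "k \<ge> 1"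
    and "k_local N k H"
    and "\<forall>q \<le> min (2 * k) N. is_zero N (apply_op N H (Wstate N q))"
  shows "\<forall>p \<le> N. is_zero N (apply_op N H (Wstate N p))"
proof -
  obtain c :: "nat set \<Rightarrow> nat set \<Rightarrow> complex" where
    cp: "\<forall>J K. c J K \<noteq> 0 \<longrightarrow> J \<subseteq> {..<N} \<and> K \<subseteq> {..<N} \<and> card (J \<union> K) \<le> k" and
    exp: "\<forall>S T. S \<subseteq> {..<N} \<longrightarrow> T \<subseteq> {..<N} \<longrightarrow>
        H S T = (\<Sum>J\<in>Pow {..<N}. \<Sum>K\<in>Pow {..<N}. c J K * nstring J K S T)"
    using assms(2) unfolding k_local_def by blast
  define g where "g p S = (\<Sum>J\<in>Pow {..<N}. \<Sum>K\<in>Pow {..<N}. c J K * (if ind J K S p then 1 else 0))" for p S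
  have HDg: "apply_op N H (Dk N p) S = g p S" if "S \<subseteq> {..<N}" for p S
    unfolding g_def by (rule HD[OF exp that])
  have hyp: "g q S = 0" if "q \<le> min (2 * k) N" "S \<subseteq> {..<N}" for q S
  proof -
    have "is_zero N (apply_op N H (Wstate N q))" using assms(3) that(1) by blast
    then have "\<forall>S. S \<subseteq> {..<N} \<longrightarrow> apply_op N H (Dk N q) S = 0"
      using Wred[of q N H] that(1) by simp
    then show ?thesis using HDg that(2) by simp
  qed
  define a where "a d J K = c J K * (if int (card J) - int (card K) = d then 1 else 0)" for d J K
  have relG: "g p S = Gf N (a (int (card S) - int p)) S" if S: "S \<subseteq> {..<N}" for p S
    unfolding g_def Gf_def a_def
  proof (rule sum.cong[OF refl], rule sum.cong[OF refl])
    fix J K assume J: "J \<in> Pow {..<N}" and "K \<in> Pow {..<N}"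
    have fS: "finite S" using S finite_subset by blast
    have fJ: "finite J" using J finite_subset by blast
    show "c J K * (if ind J K S p then 1 else 0) =
          c J K * (if int (card J) - int (card K) = int (card S) - int p then 1 else 0) *
          (if S \<inter> (J \<union> K) = J then 1 else 0)"
      unfolding rel[OF fS fJ, of K p] by (simp only: mult.assoc)
  qed
  have loc: "card (J \<union> K) \<le> k \<and> finite (J \<union> K)" if "a d J K \<noteq> 0" for d J K
  proof -
    have "c J K \<noteq> 0" using that unfolding a_def by auto
    then have h: "J \<subseteq> {..<N} \<and> K \<subseteq> {..<N} \<and> card (J \<union> K) \<le> k" using cp by blast
    then have "J \<union> K \<subseteq> {..<N}" by blast
    then have "finite (J \<union> K)" by (rule finite_subset) simp
    then show ?thesis using h by simp
  qed
  have small: "Gf N (a d) U = 0" if U: "U \<subseteq> {..<N}" "card U \<le> k" for d U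
  proof (cases "0 \<le> int (card U) - d \<and> int (card U) - d \<le> int (min (2 * k) N)")
    case True
    define q where "q = nat (int (card U) - d)"
    have q1: "q \<le> min (2 * k) N" using True unfolding q_def by linarith
    have q2: "int (card U) - int q = d" using True unfolding q_def by linarith
    have "g q U = 0" by (rule hyp[OF q1 U(1)])
    then show ?thesis using relG[OF U(1), of q] unfolding q2 by simp
  next
    case False
    show ?thesis unfolding Gf_def
    proof (rule sum.neutral, rule ballI, rule sum.neutral, rule ballI)
      fix J K assume J: "J \<in> Pow {..<N}" and K: "K \<in> Pow {..<N}"
      show "a d J K * (if U \<inter> (J \<union> K) = J then 1 else 0) = 0"
      proof (rule ccontr)
        assume nz: "a d J K * (if U \<inter> (J \<union> K) = J then 1 else 0) \<noteq> 0"
        then have a0: "a d J K \<noteq> 0" and UJ: "U \<inter> (J \<union> K) = J" by (auto split: if_splits)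
        then have cne: "c J K \<noteq> 0" and dd: "int (card J) - int (card K) = d"
          unfolding a_def by (auto split: if_splits)
        have l: "card (J \<union> K) \<le> k" and fJK: "finite (J \<union> K)" using loc[OF a0] by auto
        have fU: "finite U" using U(1) finite_subset by blast
        have fJ: "finite J" using fJK by simp
        have fK: "finite K" using fJK by simp
        have JU: "J \<subseteq> U" using UJ by blast
        have dis: "(U - J) \<inter> K = {}" using UJ by blast
        have c1: "card J \<le> card U" by (rule card_mono[OF fU JU])
        have c2: "card K \<le> card (J \<union> K)" by (rule card_mono[OF fJK]) blast
        have c3: "card (U - J) = card U - card J" by (rule card_Diff_subset[OF fJ JU])
        have fUJ: "finite (U - J)" using fU by simp
        have c4: "card ((U - J) \<union> K) = card (U - J) + card K" by (rule card_Un_disjoint[OF fUJ fK dis])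
        have sub: "(U - J) \<union> K \<subseteq> {..<N}" using U(1) K by blast
        have c5: "card ((U - J) \<union> K) \<le> N"
          using card_mono[OF finite_lessThan sub] by simp
        show False using False c1 c2 c3 c4 c5 l dd U(2) by linarith
      qed
    qed
  qed
  show ?thesis
  proof (intro allI impI)
    fix p assume pN: "p \<le> N"
    have "\<forall>S. S \<subseteq> {..<N} \<longrightarrow> apply_op N H (Dk N p) S = 0"
    proof (intro allI impI)
      fix S assume S: "S \<subseteq> {..<N}"
      have "Gf N (a (int (card S) - int p)) S = 0"
        by (rule junta_zero[of "a (int (card S) - int p)" k N, OF loc small S]) auto
      then show "apply_op N H (Dk N p) S = 0" using HDg[OF S] relG[OF S] by simp
    qed
    then show "is_zero N (apply_op N H (Wstate N p))" using Wred[OF pN] by simp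
  qed
qed

end
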